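(* Let $A,A'$ be bounded distributive lattices and $f:A\to A'$ a lattice morphism. Let $\mathcal{L}$ (resp. $\mathcal{L}'$) be the abstract logic with expressions $A$ (resp. $A'$), theories the proper filters of $A$ (resp. $A'$), and connectives $\vee,\wedge,\bot,\top$. Then $f:\mathcal{L}\to\mathcal{L}'$ is a stable logic map.
   Context: An abstract logic is a triple $\mathcal{L}=(Expr_{\mathcal{L}},Th_{\mathcal{L}},\mathcal{C}_{\mathcal{L}})$ where $Expr_{\mathcal{L}}$ is a set, $Th_{\mathcal{L}}$ a non-empty set of subsets of $Expr_{\mathcal{L}}$ (theories) closed under intersections of non-empty subfamilies, and $\mathcal{C}_{\mathcal{L}}$ a set of operations on $Expr_{\mathcal{L}}$. A theory $T$ is prime if $T=\bigcap\mathcal{T}$ for a non-empty finite $\mathcal{T}\subseteq Th_{\mathcal{L}}$ implies $T\in\mathcal{T}$; $PTh_{\mathcal{L}}$ denotes the set of prime theories (for the logic of proper filters of a bounded distributive lattice these are exactly the prime filters). A stable logic map $h:\mathcal{L}\to\mathcal{L}'$ is a function $Expr_{\mathcal{L}}\to Expr_{\mathcal{L}'}$ with $h^{-1}(T')\in Th_{\mathcal{L}}$ for all $T'\in Th_{\mathcal{L}'}$ and $h^{-1}(P')\in PTh_{\mathcal{L}}$ for all $P'\in PTh_{\mathcal{L}'}$. *)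

theory Defs
  imports Main
begin

text \<open>Abstract logics: a set of theories (subsets of the expressions).
  Here the expressions of a logic are all elements of a type.\<close>

definition abstract_logic_theories :: "'a set set \<Rightarrow> bool" where
  "abstract_logic_theories Th \<longleftrightarrow> Th \<noteq> {} \<and>
     (\<forall>\<T>. \<T> \<noteq> {} \<and> \<T> \<subseteq> Th \<longrightarrow> \<Inter>\<T> \<in> Th)"

definition prime_theories :: "'a set set \<Rightarrow> 'a set set" where
  "prime_theories Th = {T \<in> Th. \<forall>\<T>. finite \<T> \<and> \<T> \<noteq> {} \<and> \<T> \<subseteq> Th \<and> T = \<Inter>\<T> \<longrightarrow> T \<in> \<T>}"

definition stable_logic_map :: "'a set set \<Rightarrow> 'b set set \<Rightarrow> ('a \<Rightarrow> 'b) \<Rightarrow> bool" where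
  "stable_logic_map Th Th' h \<longleftrightarrow>
     (\<forall>T'\<in>Th'. h -` T' \<in> Th) \<and>
     (\<forall>P'\<in>prime_theories Th'. h -` P' \<in> prime_theories Th)"

definition proper_filter :: "'a::bounded_lattice set \<Rightarrow> bool" where
  "proper_filter F \<longleftrightarrow> top \<in> F \<and> bot \<notin> F \<and>
     (\<forall>x y. x \<in> F \<and> x \<le> y \<longrightarrow> y \<in> F) \<and>
     (\<forall>x y. x \<in> F \<and> y \<in> F \<longrightarrow> inf x y \<in> F)"

definition proper_filters :: "'a::bounded_lattice set set" where
  "proper_filters = {F. proper_filter F}"

definition lattice_morphism :: "('a::bounded_lattice \<Rightarrow> 'b::bounded_lattice) \<Rightarrow> bool" where
  "lattice_morphism f \<longleftrightarrow>
     (\<forall>x y. f (sup x y) = sup (f x) (f y)) \<and>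
     (\<forall>x y. f (inf x y) = inf (f x) (f y)) \<and>
     f bot = bot \<and> f top = top"

end

theory Submission
  imports Defs
begin

lemma upclosed_prime_aux:
  fixes Q :: "'a::{bounded_lattice, distrib_lattice} set"
  assumes fin: "finite TT" and ne: "TT \<noteq> {}"
    and up: "\<forall>T\<in>TT. \<forall>x y. x \<in> T \<and> x \<le> y \<longrightarrow> y \<in> T"
    and pr: "\<forall>x y. sup x y \<in> Q \<longrightarrow> x \<in> Q \<or> y \<in> Q"
    and sub: "\<Inter>TT \<subseteq> Q"
  shows "\<exists>T\<in>TT. T \<subseteq> Q"
  using fin ne up sub
proof (induction TT rule: finite_ne_induct)
  case (singleton x) then show ?case by auto
next
  case (insert T TT)
  show ?case
  proof (cases "T \<subseteq> Q")
    case True then show ?thesis by auto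
  next
    case False
    then obtain t where t: "t \<in> T" "t \<notin> Q" by auto
    have "\<Inter>TT \<subseteq> Q"
    proof
      fix z assume z: "z \<in> \<Inter>TT"
      have "sup t z \<in> T" using insert.prems(1) t(1) by (meson insert_iff sup_ge1)
      moreover have "sup t z \<in> \<Inter>TT" using insert.prems(1) z by (meson InterD InterI insert_iff sup_ge2)
      ultimately have "sup t z \<in> Q" using insert.prems(2) by auto
      then show "z \<in> Q" using pr t(2) by blast
    qed
    then show ?thesis using insert.IH insert.prems(1) by auto
  qed
qed

lemma prime_filter_is_prime_theory:
  fixes Q :: "'a::{bounded_lattice, distrib_lattice} set"
  assumes "proper_filter Q" and pr: "\<forall>x y. sup x y \<in> Q \<longrightarrow> x \<in> Q \<or> y \<in> Q"
  shows "Q \<in> prime_theories proper_filters"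
  unfolding prime_theories_def
proof (intro CollectI conjI allI impI)
  show "Q \<in> proper_filters" using assms(1) by (simp add: proper_filters_def)
next
  fix TT assume H: "finite TT \<and> TT \<noteq> {} \<and> TT \<subseteq> proper_filters \<and> Q = \<Inter>TT"
  then have fin: "finite TT" and sub: "TT \<subseteq> proper_filters" and
    ne: "TT \<noteq> {}" and eq: "Q = \<Inter>TT" by auto
  have up: "\<forall>T\<in>TT. \<forall>x y. x \<in> T \<and> x \<le> y \<longrightarrow> y \<in> T"
    using sub by (auto simp: proper_filters_def proper_filter_def)
  have "\<exists>T\<in>TT. T \<subseteq> Q"
    using upclosed_prime_aux[OF fin ne up pr] eq by auto
  then obtain T where "T \<in> TT" "T \<subseteq> Q" by auto
  moreover have "Q \<subseteq> T" using eq \<open>T \<in> TT\<close> by auto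
  ultimately show "Q \<in> TT" by auto
qed

lemma prime_theory_is_prime_filter:
  fixes P :: "'a::{bounded_lattice, distrib_lattice} set"
  assumes P: "P \<in> prime_theories proper_filters"
  shows "proper_filter P \<and> (\<forall>x y. sup x y \<in> P \<longrightarrow> x \<in> P \<or> y \<in> P)"
proof -
  have pf: "proper_filter P" using P by (simp add: prime_theories_def proper_filters_def)
  note pf' = pf[unfolded proper_filter_def]
  have prim: "\<And>TT. finite TT \<Longrightarrow> TT \<noteq> {} \<Longrightarrow> TT \<subseteq> proper_filters \<Longrightarrow> P = \<Inter>TT \<Longrightarrow> P \<in> TT"
    using P by (simp add: prime_theories_def)
  have "sup x y \<in> P \<longrightarrow> x \<in> P \<or> y \<in> P" for x y
  proof (rule impI, rule ccontr)
    assume s: "sup x y \<in> P" and n: "\<not> (x \<in> P \<or> y \<in> P)"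
    define F where "F a = {z. \<exists>p\<in>P. inf p a \<le> z}" for a
    have Fx: "x \<in> F x" "y \<in> F y" using pf' unfolding F_def by (auto intro!: bexI[of _ top])
    have PF: "P \<subseteq> F a" for a unfolding F_def by (auto intro: inf_le1)
    have filt: "top \<in> F a \<and> (\<forall>u v. u \<in> F a \<and> u \<le> v \<longrightarrow> v \<in> F a) \<and>
      (\<forall>u v. u \<in> F a \<and> v \<in> F a \<longrightarrow> inf u v \<in> F a)" for a
    proof -
      have "top \<in> F a" using PF pf' by auto
      moreover have "\<forall>u v. u \<in> F a \<and> u \<le> v \<longrightarrow> v \<in> F a"
        unfolding F_def using order_trans by blast
      moreover have "\<forall>u v. u \<in> F a \<and> v \<in> F a \<longrightarrow> inf u v \<in> F a"
      proof (intro allI impI)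
        fix u v assume "u \<in> F a \<and> v \<in> F a"
        then obtain p q where pq: "p \<in> P" "q \<in> P" "inf p a \<le> u" "inf q a \<le> v"
          unfolding F_def by auto
        have "inf (inf p q) a \<le> inf u v" using pq(3,4)
          by (meson inf_mono le_inf_iff order_trans inf_le1 inf_le2)
        moreover have "inf p q \<in> P" using pf' pq by auto
        ultimately show "inf u v \<in> F a" unfolding F_def by auto
      qed
      ultimately show ?thesis by blast
    qed
    have inter: "F x \<inter> F y = P"
    proof
      show "F x \<inter> F y \<subseteq> P"
      proof
        fix z assume "z \<in> F x \<inter> F y"
        then obtain p q where pq: "p \<in> P" "q \<in> P" "inf p x \<le> z" "inf q y \<le> z"
          unfolding F_def by auto
        have "inf (inf p q) (sup x y) = sup (inf (inf p q) x) (inf (inf p q) y)"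
          by (simp add: inf_sup_distrib1)
        also have "\<dots> \<le> z" using pq(3,4)
          by (meson le_sup_iff order_trans inf_mono order_refl inf_le1 inf_le2)
        finally have le: "inf (inf p q) (sup x y) \<le> z" .
        have "inf (inf p q) (sup x y) \<in> P" using pf' pq s by auto
        then show "z \<in> P" using le pf' by blast
      qed
      show "P \<subseteq> F x \<inter> F y" using PF by auto
    qed
    show False
    proof (cases "bot \<in> F x")
      case True
      then have "F x = UNIV" using filt bot_least by blast
      then have "F y = P" using inter by auto
      then show False using Fx n by auto
    next
      case bx: False
      show False
      proof (cases "bot \<in> F y")
        case True
        then have "F y = UNIV" using filt bot_least by blast
        then have "F x = P" using inter by auto
        then show False using Fx n by auto
      next
        case False
        have "{F x, F y} \<subseteq> proper_filters"
          using bx False filt by (simp add: proper_filters_def proper_filter_def)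
        then have "P \<in> {F x, F y}" using prim[of "{F x, F y}"] inter by auto
        then show False using Fx n by auto
      qed
    qed
  qed
  then show ?thesis using pf by blast
qed

theorem lemma3p13:
  fixes f :: "'a::{bounded_lattice, distrib_lattice} \<Rightarrow> 'b::{bounded_lattice, distrib_lattice}"
  assumes "lattice_morphism f"
  shows "stable_logic_map (proper_filters :: 'a set set) (proper_filters :: 'b set set) f"
proof -
  note m = assms[unfolded lattice_morphism_def]
  have mono: "x \<le> y \<Longrightarrow> f x \<le> f y" for x y
    by (metis m inf.absorb_iff1 inf.orderI inf_le2)
  have pre: "proper_filter (f -` T)" if "proper_filter T" for T :: "'b set"
    using that m mono unfolding proper_filter_def by (auto, blast)
  show ?thesis
    unfolding stable_logic_map_def
  proof (intro conjI ballI)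
    fix T' :: "'b set" assume "T' \<in> proper_filters"
    then show "f -` T' \<in> proper_filters" using pre by (simp add: proper_filters_def)
  next
    fix P' :: "'b set" assume "P' \<in> prime_theories proper_filters"
    from prime_theory_is_prime_filter[OF this]
    have h: "proper_filter P'" "\<forall>x y. sup x y \<in> P' \<longrightarrow> x \<in> P' \<or> y \<in> P'" by auto
    show "f -` P' \<in> prime_theories proper_filters"
      by (rule prime_filter_is_prime_theory) (use pre[OF h(1)] h(2) m in auto)
  qed
qed

end
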